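(* Let $k \geq 2$ and $n \geq 1$ be integers and $\Sigma_k = \{0,\ldots,k-1\}$. Suppose $w$ is a word over $\Sigma_k$ that contains every square in $\Sigma_k^{2n}$ as a factor. Then $|w| \geq k^n + n\,C(n,k) \geq 2k^n$.
   Context: A word is a square if it equals $xx$ for some word $x$; the squares in $\Sigma_k^{2n}$ are exactly the words $xx$ with $x \in \Sigma_k^n$. Two words $u,v \in \Sigma_k^n$ are conjugate if $u = ab$ and $v = ba$ for some words $a,b$. $C(n,k)$ denotes the number of conjugacy classes in $\Sigma_k^n$, i.e. $C(n,k) = \sum_{d \mid n} \frac{\phi(d)}{n} k^{n/d}$ with $\phi$ Euler's totient function. A factor of a word is a contiguous block of consecutive symbols. *)

theory Defs
  imports "HOL-Number_Theory.Number_Theory" "HOL-Library.Sublist"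
begin

definition words :: "nat \<Rightarrow> nat \<Rightarrow> nat list set" where
  "words k n = {x. length x = n \<and> set x \<subseteq> {..<k}}"

text \<open>C(n,k): number of conjugacy classes in Sigma_k^n (necklace count).\<close>
definition C :: "nat \<Rightarrow> nat \<Rightarrow> real" where
  "C n k = (\<Sum>d | d dvd n. real (totient d) / real n * real k ^ (n div d))"

end

theory Submission
  imports Defs
begin

lemma card_words: "card (words k n) = k ^ n"
proof -
  have "words k n = {xs. set xs \<subseteq> {..<k} \<and> length xs = n}" by (auto simp: words_def)
  thus ?thesis by (simp add: card_lists_length_eq)
qed

lemma finite_words: "finite (words k n)"
proof -
  have "words k n = {xs. set xs \<subseteq> {..<k} \<and> length xs = n}" by (auto simp: words_def)
  thus ?thesis by (simp add: finite_lists_length_eq)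
qed

lemma fix_card:
  assumes n: "n > 0" and r: "r < n"
  shows "k ^ gcd r n \<le> card {x \<in> words k n. rotate r x = x}"
proof -
  define g where "g = gcd r n"
  have gn: "g dvd n" and gr: "g dvd r" unfolding g_def by auto
  have g0: "g > 0" using n g_def by simp
  have gle: "g \<le> n" using gn n by (simp add: dvd_imp_le)
  define F where "F = (\<lambda>y::nat list. map (\<lambda>i. y ! (i mod g)) [0..<n])"
  have "inj_on F (words k g)"
  proof (rule inj_onI)
    fix a b assume a: "a \<in> words k g" and b: "b \<in> words k g" and e: "F a = F b"
    have "\<forall>i<g. a ! i = b ! i"
    proof (intro allI impI)
      fix i assume "i < g"
      hence "F a ! i = a ! i" "F b ! i = b ! i" using gle by (auto simp: F_def)
      thus "a ! i = b ! i" using e by simp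
    qed
    thus "a = b" using a b by (auto simp: words_def intro: nth_equalityI)
  qed
  moreover have "F ` words k g \<subseteq> {x \<in> words k n. rotate r x = x}"
  proof
    fix x assume "x \<in> F ` words k g"
    then obtain y where y: "y \<in> words k g" and x: "x = F y" by auto
    have ly: "length y = g" and sy: "set y \<subseteq> {..<k}" using y by (auto simp: words_def)
    have lx: "length x = n" using x by (simp add: F_def)
    have "set x \<subseteq> {..<k}"
    proof
      fix c assume "c \<in> set x"
      then obtain i where "i < n" "c = y ! (i mod g)" using x by (auto simp: F_def)
      moreover have "i mod g < length y" using ly g0 by simp
      ultimately show "c \<in> {..<k}" using sy nth_mem by blast
    qed
    moreover have "rotate r x = x"
    proof (rule nth_equalityI)
      show "length (rotate r x) = length x" by simp
      fix i assume i: "i < length (rotate r x)"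
      hence i': "i < n" using lx by simp
      have "rotate r x ! i = x ! ((r + i) mod n)" using i lx by (simp add: nth_rotate)
      also have "\<dots> = y ! (((r + i) mod n) mod g)" using n x by (simp add: F_def)
      also have "((r + i) mod n) mod g = (r + i) mod g" using gn by (simp add: mod_mod_cancel)
      also have "(r + i) mod g = i mod g" using gr by (simp add: mod_add_left_eq[symmetric])
      also have "y ! (i mod g) = x ! i" using i' x by (simp add: F_def)
      finally show "rotate r x ! i = x ! i" .
    qed
    ultimately show "x \<in> {x \<in> words k n. rotate r x = x}" using lx by (simp add: words_def)
  qed
  moreover have "finite {x \<in> words k n. rotate r x = x}" using finite_words by simp
  ultimately have "card (words k g) \<le> card {x \<in> words k n. rotate r x = x}"
    by (meson card_inj_on_le)
  thus ?thesis by (simp add: card_words g_def)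
qed

lemma gcd_sum:
  fixes k n :: nat
  assumes n: "n > 0"
  shows "(\<Sum>r<n. k ^ gcd r n) = (\<Sum>d | d dvd n. totient d * k ^ (n div d))"
proof -
  have "(\<Sum>r<n. k ^ gcd r n) = (\<Sum>r\<in>{0<..n}. k ^ gcd r n)"
    by (rule sum.reindex_bij_witness[of _ "\<lambda>r. if r = n then 0 else r" "\<lambda>r. if r = 0 then n else r"])
       (use n in auto)
  also have "\<dots> = (\<Sum>g | g dvd n. \<Sum>r\<in>{r\<in>{0<..n}. gcd r n = g}. k ^ gcd r n)"
    by (rule sum.group[symmetric]) (use n in auto)
  also have "\<dots> = (\<Sum>g | g dvd n. totient (n div g) * k ^ g)"
  proof (rule sum.cong[OF refl])
    fix g assume "g \<in> {g. g dvd n}"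
    hence "card {r\<in>{0<..n}. gcd r n = g} = totient (n div g)" using n card_gcd_eq_totient by auto
    moreover have "(\<Sum>r\<in>{r\<in>{0<..n}. gcd r n = g}. k ^ gcd r n) = (\<Sum>r\<in>{r\<in>{0<..n}. gcd r n = g}. k ^ g)"
      by (rule sum.cong) auto
    ultimately show "(\<Sum>r\<in>{r\<in>{0<..n}. gcd r n = g}. k ^ gcd r n) = totient (n div g) * k ^ g" by simp
  qed
  also have "\<dots> = (\<Sum>d | d dvd n. totient d * k ^ (n div d))" using n
    by (intro sum.reindex_bij_witness[of _ "(div) n" "(div) n"]) (auto elim: dvdE)
  finally show ?thesis .
qed

lemma nC: assumes n: "n > 0"
  shows "real n * C n k = real (\<Sum>d | d dvd n. totient d * k ^ (n div d))"
  unfolding C_def using n by (simp add: sum_distrib_left)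


definition stab :: "nat list \<Rightarrow> nat set" where
  "stab y = {r. r < length y \<and> rotate r y = y}"

lemma unrot: assumes "length a = n" "n > 0"
  shows "rotate (n - j mod n) (rotate j a) = a"
proof -
  have "(n - j mod n + j) mod n = 0"
  proof -
    have "n - j mod n + j = n * (j div n + 1)" proof -
      have e: "n * (j div n) + j mod n = j" by (rule mult_div_mod_eq)
      have lt: "j mod n < n" using assms(2) by simp
      show ?thesis unfolding distrib_left mult_1_right using e lt by linarith
    qed
    thus ?thesis by simp
  qed
  thus ?thesis using assms by (simp add: rotate_rotate)
qed

lemma rotate_inj: assumes "length a = length b" "rotate j a = rotate j b" shows "a = b"
proof (cases "length a = 0")
  case True thus ?thesis using assms by simp
next
  case False
  thus ?thesis using unrot[of a "length a" j] unrot[of b "length a" j] assms by auto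
qed

lemma stab_rotate: "stab (rotate j y) = stab y"
proof -
  have "rotate r (rotate j y) = rotate j y \<longleftrightarrow> rotate r y = y" for r
  proof -
    have "rotate r (rotate j y) = rotate j (rotate r y)" by (simp add: rotate_rotate add.commute)
    thus ?thesis using rotate_inj[of "rotate r y" y j] by auto
  qed
  thus ?thesis by (simp add: stab_def)
qed

lemma orbit_stab:
  assumes n: "length y = n" "n > 0"
  shows "card ((\<lambda>r. rotate r y) ` {..<n}) * card (stab y) \<le> n"
proof -
  define Orb where "Orb = (\<lambda>r. rotate r y) ` {..<n}"
  have "n = card {..<n}" by simp
  also have "\<dots> = (\<Sum>z\<in>Orb. card {r \<in> {..<n}. rotate r y = z})"
    unfolding Orb_def using sum.image_gen[of "{..<n}" "\<lambda>_. (1::nat)" "\<lambda>r. rotate r y"] by simp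
  also have "\<dots> \<ge> (\<Sum>z\<in>Orb. card (stab y))"
  proof (rule sum_mono)
    fix z assume "z \<in> Orb"
    then obtain r0 where r0: "r0 < n" "z = rotate r0 y" unfolding Orb_def by auto
    have "inj_on (\<lambda>t. (r0 + t) mod n) (stab y)"
    proof (rule inj_onI)
      fix t t' assume t: "t \<in> stab y" "t' \<in> stab y" and e: "(r0 + t) mod n = (r0 + t') mod n"
      have "t mod n = t' mod n" using e by (simp add: cong_def[symmetric] cong_add_lcancel_nat)
      thus "t = t'" using t n by (simp add: stab_def)
    qed
    moreover have "(\<lambda>t. (r0 + t) mod n) ` stab y \<subseteq> {r \<in> {..<n}. rotate r y = z}"
    proof
      fix r assume "r \<in> (\<lambda>t. (r0 + t) mod n) ` stab y"
      then obtain t where t: "t \<in> stab y" "r = (r0 + t) mod n" by auto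
      have "rotate r y = rotate (r0 + t) y" using t n by (metis rotate_conv_mod)
      also have "\<dots> = rotate r0 (rotate t y)" by (simp add: rotate_rotate)
      also have "\<dots> = z" using t r0 by (simp add: stab_def)
      finally show "r \<in> {r \<in> {..<n}. rotate r y = z}" using t n by simp
    qed
    ultimately show "card (stab y) \<le> card {r \<in> {..<n}. rotate r y = z}"
      by (intro card_inj_on_le) auto
  qed
  finally show ?thesis unfolding Orb_def by simp
qed


definition sq :: "nat list \<Rightarrow> nat \<Rightarrow> nat \<Rightarrow> bool" where
  "sq w n i \<longleftrightarrow> i + 2*n \<le> length w \<and> (\<forall>t<n. w!(i+t) = w!(i+n+t))"

definition root :: "nat list \<Rightarrow> nat \<Rightarrow> nat \<Rightarrow> nat list" where
  "root w n i = take n (drop i w)"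

lemma occ: assumes "length x = n" "sublist (x@x) w"
  shows "\<exists>i. sq w n i \<and> root w n i = x"
proof -
  obtain ps ss where w: "w = ps @ (x@x) @ ss" using assms(2) by (auto simp: sublist_def)
  define i where "i = length ps"
  have "sq w n i" unfolding sq_def using assms(1) 
    by (auto simp: w i_def nth_append)
  moreover have "root w n i = x" using assms(1) by (simp add: root_def w i_def)
  ultimately show ?thesis by blast
qed

lemma period: assumes "sq w n e" "sq w n e'" "e < e'" "e' \<le> e + n"
  shows "sq w n (Suc e)"
  unfolding sq_def
proof (intro conjI allI impI)
  show "Suc e + 2 * n \<le> length w" using assms(2,3) by (simp add: sq_def)
  fix t assume t: "t < n"
  show "w ! (Suc e + t) = w ! (Suc e + n + t)"
  proof (cases "Suc t < n")
    case True
    thus ?thesis using assms(1) unfolding sq_def by (metis add_Suc add_Suc_right add_Suc_shift)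
  next
    case False
    hence tt: "t = n - 1" using t by simp
    have "e + n - e' < n" using assms(3) t by linarith
    then have "w ! (e' + (e + n - e')) = w ! (e' + n + (e + n - e'))" using assms(2) by (simp add: sq_def)
    moreover have "e' + (e + n - e') = Suc e + t" using tt assms(3,4) t by simp
    moreover have "e' + n + (e + n - e') = Suc e + n + t" using tt assms(3,4) t by simp
    ultimately show ?thesis by simp
  qed
qed

lemma step: assumes "sq w n i" "sq w n (Suc i)" "n > 0"
  shows "root w n (Suc i) = rotate1 (root w n i)"
proof (rule nth_equalityI)
  have l: "length (root w n i) = n" "length (root w n (Suc i)) = n"
    using assms by (auto simp: sq_def root_def)
  thus "length (root w n (Suc i)) = length (rotate1 (root w n i))" by simp
  fix t assume "t < length (root w n (Suc i))"
  hence t: "t < n" using l by simp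
  have "rotate1 (root w n i) ! t = root w n i ! (Suc t mod n)" using t l by (simp add: nth_rotate1)
  moreover have "root w n (Suc i) ! t = w ! (Suc i + t)" using t assms(2) by (simp add: root_def sq_def)
  moreover have "root w n i ! (Suc t mod n) = w ! (Suc i + t)"
  proof (cases "Suc t < n")
    case True thus ?thesis using assms(1) by (simp add: root_def sq_def)
  next
    case False
    hence "Suc t = n" using t by simp
    hence "Suc t mod n = 0" by simp
    moreover have "w ! i = w ! (i + n)" using assms(1,3) unfolding sq_def by (metis add_0_right)
    moreover have "root w n i ! 0 = w ! i" using assms(1,3) by (simp add: root_def sq_def)
    moreover have "i + n = Suc i + t" using \<open>Suc t = n\<close> by simp
    ultimately show ?thesis by metis
  qed
  ultimately show "root w n (Suc i) ! t = rotate1 (root w n i) ! t" by simp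
qed

lemma run: assumes "\<forall>j. i \<le> j \<and> j \<le> i + d \<longrightarrow> sq w n j" "n > 0"
  shows "root w n (i + d) = rotate d (root w n i)"
  using assms(1)
proof (induction d)
  case 0 thus ?case by simp
next
  case (Suc d)
  hence "root w n (i + d) = rotate d (root w n i)" by simp
  moreover have "sq w n (i + d)" "sq w n (Suc (i + d))" using Suc.prems by auto
  ultimately show ?case using step[of w n "i+d"] assms(2) by (simp add: rotate1_rotate_swap)
qed


theorem proposition5:
  fixes k n :: nat and w :: "nat list"
  assumes "k \<ge> 2" and "n \<ge> 1"
    and "set w \<subseteq> {..<k}"
    and "\<forall>x \<in> words k n. sublist (x @ x) w"
  shows "real (length w) \<ge> real k ^ n + real n * C n k
       \<and> real k ^ n + real n * C n k \<ge> 2 * real k ^ n"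
proof -
  have n0: "n > 0" using assms(2) by simp
  define N where "N = length w"
  define W where "W = words k n"
  define Q where "Q = {i. sq w n i}"
  define E where "E = {e \<in> Q. \<not> sq w n (Suc e)}"
  define G where "G = (\<lambda>e. {Suc e..e+n})"
  define T where "T = (\<Sum>d | d dvd n. totient d * k ^ (n div d))"
  have QN: "Q \<subseteq> {..<N}" using n0 by (auto simp: Q_def sq_def N_def)
  have finQ: "finite Q" using QN finite_subset by blast
  have finE: "finite E" using finQ by (simp add: E_def)
  have gap: "e + n < e'" if "e \<in> E" "sq w n e'" "e < e'" for e e'
  proof (rule ccontr)
    assume "\<not> e + n < e'"
    hence "sq w n (Suc e)" using period[of w n e e'] that by (auto simp: E_def Q_def)
    thus False using that by (simp add: E_def)
  qed
  have disj1: "Q \<inter> (\<Union>e\<in>E. G e) = {}"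
    using gap by (fastforce simp: G_def Q_def)
  have disj2: "\<forall>e\<in>E. \<forall>e'\<in>E. e \<noteq> e' \<longrightarrow> G e \<inter> G e' = {}"
  proof (intro ballI impI)
    fix e e' assume ee: "e \<in> E" "e' \<in> E" "e \<noteq> e'"
    show "G e \<inter> G e' = {}"
    proof (cases "e < e'")
      case True
      hence "e + n < e'" using gap[of e e'] ee by (auto simp: E_def Q_def)
      thus ?thesis by (auto simp: G_def)
    next
      case False
      hence "e' + n < e" using gap[of e' e] ee by (auto simp: E_def Q_def)
      thus ?thesis by (auto simp: G_def)
    qed
  qed
  have GN: "(\<Union>e\<in>E. G e) \<subseteq> {..<N}"
    using n0 by (auto simp: G_def E_def Q_def sq_def N_def)
  have "card (Q \<union> (\<Union>e\<in>E. G e)) = card Q + card (\<Union>e\<in>E. G e)"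
    using disj1 finQ finE by (intro card_Un_disjoint) (auto simp: G_def)
  also have "card (\<Union>e\<in>E. G e) = (\<Sum>e\<in>E. card (G e))"
    using finE disj2 by (intro card_UN_disjoint) (auto simp: G_def)
  also have "\<dots> = n * card E" by (simp add: G_def)
  finally have cnt: "card Q + n * card E \<le> N"
    using QN GN by (metis card_lessThan card_mono finite_lessThan le_sup_iff)
  define f where "f = (\<lambda>x. LEAST i. sq w n i \<and> root w n i = x)"
  have f_prop: "sq w n (f x) \<and> root w n (f x) = x" if "x \<in> W" for x
  proof -
    have "length x = n" using that by (simp add: W_def words_def)
    hence "\<exists>i. sq w n i \<and> root w n i = x" using occ assms(4) that W_def by blast
    thus ?thesis unfolding f_def by (rule LeastI_ex)
  qed
  have "inj_on f W" by (rule inj_onI) (metis f_prop)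
  moreover have "f ` W \<subseteq> Q" using f_prop by (auto simp: Q_def)
  ultimately have cQ: "k ^ n \<le> card Q"
    using card_inj_on_le[of f W Q] finQ by (simp add: W_def card_words)
  define en where "en = (\<lambda>i. LEAST j. i \<le> j \<and> \<not> sq w n (Suc j))"
  have en_ex: "\<exists>j. i \<le> j \<and> \<not> sq w n (Suc j)" for i
    by (rule exI[of _ "i + N"]) (auto simp: sq_def N_def)
  have en1: "i \<le> en i \<and> \<not> sq w n (Suc (en i))" for i
    unfolding en_def by (rule LeastI_ex[OF en_ex])
  have en2: "sq w n (i + d)" if "sq w n i" "i + d \<le> en i" for i d
    using that
  proof (induction d)
    case 0 thus ?case by simp
  next
    case (Suc d)
    hence "sq w n (i + d)" by simp
    have "i + d < en i" using Suc.prems by simp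
    hence "\<not> (i \<le> i + d \<and> \<not> sq w n (Suc (i + d)))" unfolding en_def by (rule not_less_Least)
    thus ?case by simp
  qed
  have enE: "en i \<in> E" if "sq w n i" for i
  proof -
    have "sq w n (i + (en i - i))" using en2[OF that, of "en i - i"] en1[of i] by simp
    hence "sq w n (en i)" using en1[of i] by simp
    thus ?thesis using en1[of i] by (simp add: E_def Q_def)
  qed
  have key: "(\<Sum>x\<in>{x\<in>W. en (f x) = e}. card (stab x)) \<le> n" if e: "e \<in> E" for e
  proof -
    define y where "y = root w n e"
    have ly: "length y = n" using e by (auto simp: y_def root_def E_def Q_def sq_def)
    define S where "S = {x\<in>W. en (f x) = e}"
    have Sx: "x \<in> (\<lambda>r. rotate r y) ` {..<n} \<and> stab x = stab y" if x: "x \<in> S" for x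
    proof -
      have xW: "x \<in> W" and ex: "en (f x) = e" using x by (auto simp: S_def)
      have lx: "length x = n" using xW by (simp add: W_def words_def)
      have sqf: "sq w n (f x)" and rx: "root w n (f x) = x" using f_prop[OF xW] by auto
      have fe: "f x \<le> e" using en1[of "f x"] ex by simp
      have "\<forall>j. f x \<le> j \<and> j \<le> f x + (e - f x) \<longrightarrow> sq w n j"
      proof (intro allI impI)
        fix j assume "f x \<le> j \<and> j \<le> f x + (e - f x)"
        thus "sq w n j" using en2[OF sqf, of "j - f x"] ex fe by simp
      qed
      hence "root w n (f x + (e - f x)) = rotate (e - f x) (root w n (f x))" using run n0 by blast
      hence yx: "y = rotate (e - f x) x" using fe rx by (simp add: y_def)
      hence "rotate (n - (e - f x) mod n) y = x" using unrot[OF lx n0] by simp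
      hence "rotate ((n - (e - f x) mod n) mod n) y = x" using ly by (metis rotate_conv_mod)
      moreover have "(n - (e - f x) mod n) mod n < n" using n0 by simp
      ultimately have "x \<in> (\<lambda>r. rotate r y) ` {..<n}"
        by (metis (no_types, lifting) image_eqI lessThan_iff)
      moreover have "stab x = stab y" using yx stab_rotate by simp
      ultimately show ?thesis by simp
    qed
    have "(\<Sum>x\<in>S. card (stab x)) = (\<Sum>x\<in>S. card (stab y))" using Sx by simp
    also have "\<dots> = card S * card (stab y)" by simp
    also have "\<dots> \<le> card ((\<lambda>r. rotate r y) ` {..<n}) * card (stab y)"
      using Sx by (intro mult_right_mono card_mono) auto
    also have "\<dots> \<le> n" using orbit_stab[OF ly n0] .
    finally show ?thesis by (simp add: S_def)
  qed
  have finW: "finite W" by (simp add: W_def finite_words)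
  have "(\<Sum>x\<in>W. card (stab x)) = (\<Sum>e\<in>E. \<Sum>x\<in>{x\<in>W. en (f x) = e}. card (stab x))"
    using finW finE enE f_prop by (intro sum.group[symmetric]) auto
  also have "\<dots> \<le> (\<Sum>e\<in>E. n)" using key by (intro sum_mono) auto
  finally have st1: "(\<Sum>x\<in>W. card (stab x)) \<le> n * card E" by (simp add: mult.commute)
  have "(\<Sum>x\<in>W. card (stab x)) = (\<Sum>x\<in>W. \<Sum>r\<in>{r\<in>{..<n}. rotate r x = x}. (1::nat))"
    by (intro sum.cong refl) (auto simp: stab_def W_def words_def)
  also have "\<dots> = (\<Sum>r\<in>{..<n}. \<Sum>x\<in>{x\<in>W. rotate r x = x}. (1::nat))"
    using finW by (rule sum.swap_restrict) simp
  also have "\<dots> = (\<Sum>r<n. card {x\<in>W. rotate r x = x})" by simp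
  also have "\<dots> \<ge> (\<Sum>r<n. k ^ gcd r n)"
    using fix_card[OF n0] by (intro sum_mono) (simp add: W_def)
  finally have "(\<Sum>r<n. k ^ gcd r n) \<le> (\<Sum>x\<in>W. card (stab x))" .
  hence T1: "T \<le> n * card E" using st1 gcd_sum[OF n0, of k] T_def by simp
  have TnC: "real n * C n k = real T" using nC[OF n0] T_def by simp
  have T2: "k ^ n \<le> T"
  proof -
    have "totient 1 * k ^ (n div 1) \<le> T" unfolding T_def
      using n0 by (intro member_le_sum) auto
    thus ?thesis by simp
  qed
  have A: "k ^ n + T \<le> N" using cnt cQ T1 by linarith
  show ?thesis
  proof
    have "real (k ^ n + T) \<le> real N" using A by linarith
    thus "real k ^ n + real n * C n k \<le> real (length w)" using TnC N_def by simp
  next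
    have "real (k ^ n) \<le> real T" using T2 by linarith
    thus "2 * real k ^ n \<le> real k ^ n + real n * C n k" using TnC by simp
  qed
qed

end
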